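(* Let $X$ be a Tychonoff space. Every non-zero minimal ideal $I$ of $T''(X)$ is generated by an idempotent $e\in T''(X)$ such that $X\setminus Z(e)$ contains exactly one element.
   Context: $C(X)$ is the ring of real-valued continuous functions on $X$; a cozero set is a set $\{x: h(x)\neq 0\}$ with $h\in C(X)$. $T''(X)$ is the ring (under pointwise operations) of all functions $f\colon X\to\mathbb{R}$ for which there is a dense cozero set $U$ of $X$ with $f|_U$ continuous. $Z(f)=\{x\in X: f(x)=0\}$. A minimal ideal is a non-zero ideal not properly containing any non-zero ideal. *)

theory Defs
  imports "HOL-Analysis.Analysis" "HOL-Algebra.Ideal"
begin

definition tychonoff_space :: "'a topology \<Rightarrow> bool" where
  "tychonoff_space X \<longleftrightarrow> completely_regular_space X \<and> t1_space X"

definition cozero_set :: "'a topology \<Rightarrow> 'a set \<Rightarrow> bool" where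
  "cozero_set X U \<longleftrightarrow>
     (\<exists>h. continuous_map X euclideanreal h \<and> U = {x \<in> topspace X. h x \<noteq> 0})"

definition T2_carrier :: "'a topology \<Rightarrow> ('a \<Rightarrow> real) set" where
  "T2_carrier X = {f. (\<forall>x. x \<notin> topspace X \<longrightarrow> f x = 0) \<and>
      (\<exists>U. cozero_set X U \<and> X closure_of U = topspace X \<and>
           continuous_map (subtopology X U) euclideanreal f)}"

definition T2_ring :: "'a topology \<Rightarrow> ('a \<Rightarrow> real) ring" where
  "T2_ring X = \<lparr> carrier = T2_carrier X,
                 mult = (\<lambda>f g x. f x * g x),
                 one = (\<lambda>x. if x \<in> topspace X then 1 else 0),
                 zero = (\<lambda>x. 0),
                 add = (\<lambda>f g x. f x + g x) \<rparr>"

definition zero_set :: "'a topology \<Rightarrow> ('a \<Rightarrow> real) \<Rightarrow> 'a set" where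
  "zero_set X f = {x \<in> topspace X. f x = 0}"

definition minimal_ideal :: "'b set \<Rightarrow> ('b, 'm) ring_scheme \<Rightarrow> bool" where
  "minimal_ideal I R \<longleftrightarrow> ideal I R \<and> I \<noteq> {\<zero>\<^bsub>R\<^esub>} \<and>
     (\<forall>J. ideal J R \<and> J \<noteq> {\<zero>\<^bsub>R\<^esub>} \<and> J \<subseteq> I \<longrightarrow> J = I)"

end

theory Submission
  imports Defs
begin

lemma T2_cont_in_carrier:
  assumes "continuous_map X euclideanreal g"
  shows "(\<lambda>x. if x \<in> topspace X then g x else 0) \<in> T2_carrier X"
proof -
  have "cozero_set X (topspace X)"
    unfolding cozero_set_def by (rule exI[of _ "\<lambda>x. 1"]) auto
  moreover have "continuous_map (subtopology X (topspace X)) euclideanreal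
      (\<lambda>x. if x \<in> topspace X then g x else 0)"
    unfolding subtopology_topspace by (rule continuous_map_eq[OF assms]) auto
  ultimately show ?thesis unfolding T2_carrier_def by (auto intro!: exI[of _ "topspace X"])
qed

theorem theorem5p0:
  fixes X :: "'a topology" and I :: "('a \<Rightarrow> real) set"
  assumes "tychonoff_space X"
    and "minimal_ideal I (T2_ring X)"
  shows "\<exists>e \<in> carrier (T2_ring X).
           e \<otimes>\<^bsub>T2_ring X\<^esub> e = e \<and>
           I = Idl\<^bsub>T2_ring X\<^esub> {e} \<and>
           (\<exists>!x. x \<in> topspace X - zero_set X e)"
proof -
  let ?R = "T2_ring X"
  have idl: "ideal I ?R" and nz: "I \<noteq> {\<zero>\<^bsub>?R\<^esub>}"
    and minI: "\<And>J. ideal J ?R \<Longrightarrow> J \<noteq> {\<zero>\<^bsub>?R\<^esub>} \<Longrightarrow> J \<subseteq> I \<Longrightarrow> J = I"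
    using assms(2) unfolding minimal_ideal_def by auto
  have rR: "ring ?R" using idl ideal.axioms(2) by blast
  have cR: "cring ?R"
    apply (rule cring.intro[OF rR])
    apply (rule comm_monoid.intro[OF ring.axioms(2)[OF rR]])
    apply (rule comm_monoid_axioms.intro)
    by (simp add: T2_ring_def fun_eq_iff mult.commute)
  interpret cring ?R by (rule cR)
  have zero: "\<zero>\<^bsub>?R\<^esub> = (\<lambda>x. 0)" by (simp add: T2_ring_def)
  have mul: "\<And>a b. a \<otimes>\<^bsub>?R\<^esub> b = (\<lambda>x. a x * b x)" by (simp add: T2_ring_def)
  have car: "carrier ?R = T2_carrier X" by (simp add: T2_ring_def)
  have vanish: "\<And>a x. a \<in> carrier ?R \<Longrightarrow> x \<notin> topspace X \<Longrightarrow> a x = 0"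
    by (auto simp: car T2_carrier_def)
  have Icar: "I \<subseteq> carrier ?R" using idl ideal.axioms(1) additive_subgroup.a_subset by blast
  have z0: "\<zero>\<^bsub>?R\<^esub> \<in> I" using idl ideal.axioms(1) additive_subgroup.zero_closed by blast
  have gen: "\<And>a. a \<in> I \<Longrightarrow> a \<noteq> (\<lambda>x. 0) \<Longrightarrow> I = PIdl\<^bsub>?R\<^esub> a"
  proof -
    fix a assume a: "a \<in> I" "a \<noteq> (\<lambda>x. 0)"
    have ac: "a \<in> carrier ?R" using a Icar by blast
    show "I = PIdl\<^bsub>?R\<^esub> a"
    proof (rule minI[symmetric])
      show "ideal (PIdl\<^bsub>?R\<^esub> a) ?R" using cgenideal_ideal[OF ac] .
      show "PIdl\<^bsub>?R\<^esub> a \<noteq> {\<zero>\<^bsub>?R\<^esub>}" using cgenideal_self[OF ac] a zero by auto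
      show "PIdl\<^bsub>?R\<^esub> a \<subseteq> I" unfolding cgenideal_def
        using idl ideal.I_r_closed a by (auto intro: ideal.I_l_closed[OF idl])
    qed
  qed
  have "\<exists>f\<in>I. f \<noteq> \<zero>\<^bsub>?R\<^esub>" using nz z0 by blast
  then obtain f where f: "f \<in> I" "f \<noteq> (\<lambda>x. 0)" unfolding zero by blast
  then obtain x0 where x0: "f x0 \<noteq> 0" by (meson ext)
  have fc: "f \<in> carrier ?R" using f Icar by blast
  have x0t: "x0 \<in> topspace X" using vanish[OF fc] x0 by blast
  have only: "f x1 = 0" if "x1 \<noteq> x0" for x1
  proof (rule ccontr)
    assume fx1: "f x1 \<noteq> 0"
    have x1t: "x1 \<in> topspace X" using vanish[OF fc] fx1 by blast
    have cl: "closedin X {x1}" using assms(1) x1t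
      unfolding tychonoff_space_def t1_space_closedin_singleton by blast
    have crs: "completely_regular_space X" using assms(1) unfolding tychonoff_space_def by blast
    have pre: "closedin X {x1} \<and> x0 \<in> topspace X - {x1}" using cl x0t that by simp
    obtain g :: "'a \<Rightarrow> real" where g: "continuous_map X (top_of_set {0..1}) g" "g x0 = 0" "g ` {x1} \<subseteq> {1}"
      using crs[unfolded completely_regular_space_def, rule_format, OF pre] by blast
    have gc: "continuous_map X euclideanreal g"
      using g(1) continuous_map_into_fulltopology by blast
    define g' where "g' = (\<lambda>x. if x \<in> topspace X then g x else 0)"
    have g'c: "g' \<in> carrier ?R" unfolding g'_def car by (rule T2_cont_in_carrier[OF gc])
    have aI: "f \<otimes>\<^bsub>?R\<^esub> g' \<in> I" using ideal.I_r_closed[OF idl f(1) g'c] .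
    have "(f \<otimes>\<^bsub>?R\<^esub> g') x1 \<noteq> 0" using fx1 g(3) x1t by (simp add: mul g'_def)
    hence "f \<otimes>\<^bsub>?R\<^esub> g' \<noteq> (\<lambda>x. 0)" by auto
    hence "f \<in> PIdl\<^bsub>?R\<^esub> (f \<otimes>\<^bsub>?R\<^esub> g')" using gen aI f(1) by blast
    then obtain h where "f = h \<otimes>\<^bsub>?R\<^esub> (f \<otimes>\<^bsub>?R\<^esub> g')" unfolding cgenideal_def by blast
    hence "f x0 = h x0 * (f x0 * g' x0)" by (simp add: mul fun_eq_iff)
    thus False using x0 g(2) x0t by (simp add: g'_def)
  qed
  define c where "c = (\<lambda>x. if x \<in> topspace X then 1 / f x0 else 0)"
  have cc: "c \<in> carrier ?R" unfolding c_def car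
    by (rule T2_cont_in_carrier) simp
  define e where "e = (\<lambda>x. if x = x0 then (1::real) else 0)"
  have ee: "e = c \<otimes>\<^bsub>?R\<^esub> f"
    using only x0 x0t by (auto simp: mul fun_eq_iff e_def c_def)
  have eI: "e \<in> I" unfolding ee using ideal.I_l_closed[OF idl f(1) cc] .
  have ec: "e \<in> carrier ?R" using eI Icar by blast
  have "e \<noteq> (\<lambda>x. 0)" by (auto simp: e_def fun_eq_iff)
  hence "I = PIdl\<^bsub>?R\<^esub> e" using gen eI by blast
  hence IE: "I = Idl\<^bsub>?R\<^esub> {e}" using cgenideal_eq_genideal[OF ec] by simp
  have idem: "e \<otimes>\<^bsub>?R\<^esub> e = e" by (auto simp: mul e_def fun_eq_iff)
  have sing: "topspace X - zero_set X e = {x0}" using x0t by (auto simp: zero_set_def e_def)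
  have "\<exists>!x. x \<in> topspace X - zero_set X e" unfolding sing by simp
  with ec idem IE show ?thesis by blast
qed

end
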